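(* Fix a joint distribution of $(X,Y,Z)$, where $X$ is a feature vector, $Y\in\{0,1\}$ is the true label and $Z$ is a sensitive attribute taking values in a finite set $\mathcal{G}$ with $|\mathcal{G}|\ge 2$. Suppose that the fairness-accuracy pairs $(\epsilon_1,a_1),(\epsilon_2,a_2),\ldots,(\epsilon_k,a_k)$ are all achievable with respect to demographic parity. Then for any $\beta_1,\ldots,\beta_k\in[0,1]$ with $\sum_{i=1}^k\beta_i=1$, the pair $\left(\sum_{i=1}^{k}\beta_i\epsilon_i,\ \sum_{i=1}^{k}\beta_i a_i\right)$ is also achievable with respect to demographic parity. Consequently, every point of the convex hull of $\{(\epsilon_1,a_1),\ldots,(\epsilon_k,a_k)\}$ is achievable with respect to demographic parity.
   Context: A (possibly randomized) binary classifier is a conditional distribution $\pi(\hat Y\mid X)$ on $\{0,1\}$ given the features $X$ (it does not take $Z$ as input); the prediction $\hat Y$ is drawn from $\pi(\cdot\mid X)$, so that $(X,Y,Z,\hat Y)$ has a joint distribution in which $\hat Y$ is conditionally independent of $(Y,Z)$ given $X$. Its accuracy is $\mathrm{Acc}(\pi)=\Pr(\hat Y=Y)$. Write $\pi(1\mid Z=i)=\Pr(\hat Y=1\mid Z=i)$. The demographic parity bias of $\pi$ is $\Delta_{DP}(\pi)=\sum_{i\neq j,\ i,j\in\mathcal{G}}|\pi(1\mid Z=i)-\pi(1\mid Z=j)|$. A pair $(\epsilon,a)$ of real numbers is achievable with respect to demographic parity if there exists a classifier $\pi$ with $\mathrm{Acc}(\pi)\ge a$ and $\Delta_{DP}(\pi)\le\epsilon$.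 *)

theory Defs
  imports "HOL-Probability.Probability"
begin

text \<open>A (possibly randomized) binary classifier is represented by its conditional
  distribution on {0,1} given the features, i.e. by the map
  x \<mapsto> pi(1 | X = x), a measurable function with values in [0,1].\<close>
definition classifier :: "'x measure \<Rightarrow> ('x \<Rightarrow> real) \<Rightarrow> bool" where
  "classifier SX p \<longleftrightarrow> p \<in> borel_measurable SX \<and> (\<forall>x\<in>space SX. 0 \<le> p x \<and> p x \<le> 1)"

text \<open>Accuracy Pr(Yhat = Y), where Yhat is drawn from p(.|X) independently of (Y,Z) given X.\<close>
definition acc :: "'w measure \<Rightarrow> ('w \<Rightarrow> 'x) \<Rightarrow> ('w \<Rightarrow> bool) \<Rightarrow> ('x \<Rightarrow> real) \<Rightarrow> real" where
  "acc M X Y p = (\<integral>\<omega>. (if Y \<omega> then p (X \<omega>) else 1 - p (X \<omega>)) \<partial>M)"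

text \<open>pi(1 | Z = i) = Pr(Yhat = 1, Z = i) / Pr(Z = i).\<close>
definition pos_rate :: "'w measure \<Rightarrow> ('w \<Rightarrow> 'x) \<Rightarrow> ('w \<Rightarrow> 'g) \<Rightarrow> ('x \<Rightarrow> real) \<Rightarrow> 'g \<Rightarrow> real" where
  "pos_rate M X Z p i =
     (\<integral>\<omega>. indicator {\<omega>\<in>space M. Z \<omega> = i} \<omega> * p (X \<omega>) \<partial>M) / measure M {\<omega>\<in>space M. Z \<omega> = i}"

definition dp_bias :: "'w measure \<Rightarrow> ('w \<Rightarrow> 'x) \<Rightarrow> ('w \<Rightarrow> 'g) \<Rightarrow> 'g set \<Rightarrow> ('x \<Rightarrow> real) \<Rightarrow> real" where
  "dp_bias M X Z G p = (\<Sum>i\<in>G. \<Sum>j\<in>G - {i}. \<bar>pos_rate M X Z p i - pos_rate M X Z p j\<bar>)"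

definition achievable_DP ::
  "'w measure \<Rightarrow> 'x measure \<Rightarrow> ('w \<Rightarrow> 'x) \<Rightarrow> ('w \<Rightarrow> bool) \<Rightarrow> ('w \<Rightarrow> 'g) \<Rightarrow> 'g set \<Rightarrow> real \<Rightarrow> real \<Rightarrow> bool" where
  "achievable_DP M SX X Y Z G \<epsilon> a \<longleftrightarrow>
     (\<exists>p. classifier SX p \<and> acc M X Y p \<ge> a \<and> dp_bias M X Z G p \<le> \<epsilon>)"

end

theory Submission
  imports Defs
begin

lemma mix_achievable:
  fixes M :: "'w measure" and SX :: "'x measure"
    and X :: "'w \<Rightarrow> 'x" and Y :: "'w \<Rightarrow> bool" and Z :: "'w \<Rightarrow> 'g" and G :: "'g set"
  assumes P: "prob_space M"
    and mX: "X \<in> M \<rightarrow>\<^sub>M SX"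
    and mY: "Y \<in> M \<rightarrow>\<^sub>M count_space UNIV"
    and mZ: "Z \<in> M \<rightarrow>\<^sub>M count_space G"
    and A1: "achievable_DP M SX X Y Z G e1 a1"
    and A2: "achievable_DP M SX X Y Z G e2 a2"
    and u: "0 \<le> u" and v: "0 \<le> v" and uv: "u + v = 1"
  shows "achievable_DP M SX X Y Z G (u * e1 + v * e2) (u * a1 + v * a2)"
proof -
  interpret prob_space M by (rule P)
  obtain p1 where c1: "classifier SX p1" and ac1: "acc M X Y p1 \<ge> a1" and d1: "dp_bias M X Z G p1 \<le> e1"
    using A1 unfolding achievable_DP_def by blast
  obtain p2 where c2: "classifier SX p2" and ac2: "acc M X Y p2 \<ge> a2" and d2: "dp_bias M X Z G p2 \<le> e2"
    using A2 unfolding achievable_DP_def by blast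
  define p where "p = (\<lambda>x. u * p1 x + v * p2 x)"
  have p1m: "p1 \<in> borel_measurable SX" and p1b: "\<And>x. x \<in> space SX \<Longrightarrow> 0 \<le> p1 x \<and> p1 x \<le> 1"
    using c1 unfolding classifier_def by auto
  have p2m: "p2 \<in> borel_measurable SX" and p2b: "\<And>x. x \<in> space SX \<Longrightarrow> 0 \<le> p2 x \<and> p2 x \<le> 1"
    using c2 unfolding classifier_def by auto
  have Xs: "\<And>w. w \<in> space M \<Longrightarrow> X w \<in> space SX" using mX by (auto simp: measurable_def)
  have cp: "classifier SX p"
  proof -
    have "p \<in> borel_measurable SX" unfolding p_def using p1m p2m by measurable
    moreover have "\<forall>x\<in>space SX. 0 \<le> p x \<and> p x \<le> 1"
    proof
      fix x assume x: "x \<in> space SX"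
      have "u * p1 x \<le> u * 1" using p1b[OF x] u by (intro mult_left_mono) auto
      moreover have "v * p2 x \<le> v * 1" using p2b[OF x] v by (intro mult_left_mono) auto
      ultimately show "0 \<le> p x \<and> p x \<le> 1" unfolding p_def using p1b[OF x] p2b[OF x] u v uv by auto
    qed
    ultimately show ?thesis unfolding classifier_def by auto
  qed
  have predY: "Measurable.pred M Y" using mY by (simp add: pred_def measurable_count_space_eq2 sets_Collect_single)
  have pm1: "(\<lambda>w. p1 (X w)) \<in> borel_measurable M" using p1m mX by measurable
  have pm2: "(\<lambda>w. p2 (X w)) \<in> borel_measurable M" using p2m mX by measurable
  define f1 where "f1 = (\<lambda>w. if Y w then p1 (X w) else 1 - p1 (X w))"
  define f2 where "f2 = (\<lambda>w. if Y w then p2 (X w) else 1 - p2 (X w))"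
  have int1: "integrable M f1"
  proof (rule integrable_const_bound[where B=1])
    show "AE x in M. norm (f1 x) \<le> 1" using p1b Xs by (auto simp: f1_def)
    show "f1 \<in> borel_measurable M" unfolding f1_def using pm1 predY by measurable
  qed
  have int2: "integrable M f2"
  proof (rule integrable_const_bound[where B=1])
    show "AE x in M. norm (f2 x) \<le> 1" using p2b Xs by (auto simp: f2_def)
    show "f2 \<in> borel_measurable M" unfolding f2_def using pm2 predY by measurable
  qed
  have "acc M X Y p = (\<integral>w. u * f1 w + v * f2 w \<partial>M)"
    unfolding acc_def
    proof (rule Bochner_Integration.integral_cong)
      fix w
      have "1 - (u * p1 (X w) + v * p2 (X w)) = u * (1 - p1 (X w)) + v * (1 - p2 (X w))"
        using uv by (simp add: right_diff_distrib)
      then show "(if Y w then p (X w) else 1 - p (X w)) = u * f1 w + v * f2 w"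
        by (simp add: p_def f1_def f2_def)
    qed simp
  also have "\<dots> = u * acc M X Y p1 + v * acc M X Y p2"
    using int1 int2 by (simp add: acc_def f1_def[symmetric] f2_def[symmetric])
  finally have accp: "acc M X Y p = u * acc M X Y p1 + v * acc M X Y p2" .
  have accge: "acc M X Y p \<ge> u * a1 + v * a2"
    unfolding accp using ac1 ac2 u v by (intro add_mono mult_left_mono) auto
  have pr: "pos_rate M X Z p i = u * pos_rate M X Z p1 i + v * pos_rate M X Z p2 i" if i: "i \<in> G" for i
  proof -
    define S where "S = {\<omega>\<in>space M. Z \<omega> = i}"
    have S: "S \<in> sets M"
    proof -
      have "Z -` {i} \<inter> space M \<in> sets M" using mZ i by (intro measurable_sets[OF mZ]) auto
      moreover have "{\<omega>\<in>space M. Z \<omega> = i} = Z -` {i} \<inter> space M" by auto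
      ultimately show ?thesis by (simp add: S_def)
    qed
    have g1: "integrable M (\<lambda>w. indicator S w * p1 (X w))"
    proof (rule integrable_const_bound[where B=1])
      show "AE x in M. norm (indicator S x * p1 (X x)) \<le> (1::real)" using p1b Xs
        by (auto simp: indicator_def)
      show "(\<lambda>w. indicator S w * p1 (X w)) \<in> borel_measurable M" using pm1 S by measurable
    qed
    have g2: "integrable M (\<lambda>w. indicator S w * p2 (X w))"
    proof (rule integrable_const_bound[where B=1])
      show "AE x in M. norm (indicator S x * p2 (X x)) \<le> (1::real)" using p2b Xs
        by (auto simp: indicator_def)
      show "(\<lambda>w. indicator S w * p2 (X w)) \<in> borel_measurable M" using pm2 S by measurable
    qed
    have "(\<integral>w. indicator S w * p (X w) \<partial>M) = (\<integral>w. u * (indicator S w * p1 (X w)) + v * (indicator S w * p2 (X w)) \<partial>M)"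
      by (rule Bochner_Integration.integral_cong) (auto simp: p_def algebra_simps)
    also have "\<dots> = u * (\<integral>w. indicator S w * p1 (X w) \<partial>M) + v * (\<integral>w. indicator S w * p2 (X w) \<partial>M)"
      using g1 g2 by simp
    finally show ?thesis unfolding pos_rate_def S_def[symmetric]
      by (simp add: add_divide_distrib)
  qed
  have "dp_bias M X Z G p \<le> u * dp_bias M X Z G p1 + v * dp_bias M X Z G p2"
    unfolding dp_bias_def sum_distrib_left sum.distrib[symmetric]
  proof (intro sum_mono)
    fix i j assume i: "i \<in> G" and j: "j \<in> G - {i}"
    have "\<bar>pos_rate M X Z p i - pos_rate M X Z p j\<bar>
        = \<bar>u * (pos_rate M X Z p1 i - pos_rate M X Z p1 j) + v * (pos_rate M X Z p2 i - pos_rate M X Z p2 j)\<bar>"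
      using pr i j by (simp add: algebra_simps)
    also have "\<dots> \<le> \<bar>u * (pos_rate M X Z p1 i - pos_rate M X Z p1 j)\<bar> + \<bar>v * (pos_rate M X Z p2 i - pos_rate M X Z p2 j)\<bar>"
      by (rule abs_triangle_ineq)
    also have "\<dots> = u * \<bar>pos_rate M X Z p1 i - pos_rate M X Z p1 j\<bar> + v * \<bar>pos_rate M X Z p2 i - pos_rate M X Z p2 j\<bar>"
      using u v by (simp add: abs_mult)
    finally show "\<bar>pos_rate M X Z p i - pos_rate M X Z p j\<bar>
        \<le> u * \<bar>pos_rate M X Z p1 i - pos_rate M X Z p1 j\<bar> + v * \<bar>pos_rate M X Z p2 i - pos_rate M X Z p2 j\<bar>" .
  qed
  also have "\<dots> \<le> u * e1 + v * e2" using d1 d2 u v by (intro add_mono mult_left_mono) auto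
  finally show ?thesis unfolding achievable_DP_def using cp accge by blast
qed

theorem proposition1:
  fixes M :: "'w measure" and SX :: "'x measure"
    and X :: "'w \<Rightarrow> 'x" and Y :: "'w \<Rightarrow> bool" and Z :: "'w \<Rightarrow> 'g" and G :: "'g set"
    and k :: nat and eps a \<beta> :: "nat \<Rightarrow> real"
  assumes "prob_space M"
    and "X \<in> M \<rightarrow>\<^sub>M SX"
    and "Y \<in> M \<rightarrow>\<^sub>M count_space UNIV"
    and "Z \<in> M \<rightarrow>\<^sub>M count_space G"
    and "finite G" and "card G \<ge> 2"
    and ach: "\<forall>i<k. achievable_DP M SX X Y Z G (eps i) (a i)"
  shows "((\<forall>i<k. 0 \<le> \<beta> i \<and> \<beta> i \<le> 1) \<and> (\<Sum>i<k. \<beta> i) = 1 \<longrightarrow>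
            achievable_DP M SX X Y Z G (\<Sum>i<k. \<beta> i * eps i) (\<Sum>i<k. \<beta> i * a i))
       \<and> (\<forall>q \<in> convex hull {(eps i, a i) | i. i < k}. achievable_DP M SX X Y Z G (fst q) (snd q))"
proof -
  define C where "C = {q. achievable_DP M SX X Y Z G (fst q) (snd q)}"
  have cvx: "convex C"
    unfolding convex_def C_def
  proof (clarify)
    fix e1 a1 e2 a2 :: real and u v :: real
    assume "achievable_DP M SX X Y Z G (fst (e1, a1)) (snd (e1, a1))"
      "achievable_DP M SX X Y Z G (fst (e2, a2)) (snd (e2, a2))" "0 \<le> u" "0 \<le> v" "u + v = 1"
    then show "achievable_DP M SX X Y Z G (fst (u *\<^sub>R (e1, a1) + v *\<^sub>R (e2, a2))) (snd (u *\<^sub>R (e1, a1) + v *\<^sub>R (e2, a2)))"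
      using mix_achievable[OF assms(1-4)] by simp
  qed
  have sub: "{(eps i, a i) | i. i < k} \<subseteq> C" using ach unfolding C_def by auto
  show ?thesis
  proof (intro conjI impI ballI)
    assume b: "(\<forall>i<k. 0 \<le> \<beta> i \<and> \<beta> i \<le> 1) \<and> (\<Sum>i<k. \<beta> i) = 1"
    have "(\<Sum>j\<in>{..<k}. \<beta> j *\<^sub>R (eps j, a j)) \<in> C"
      by (rule convex_sum) (use b sub cvx in auto)
    moreover have "(\<Sum>j\<in>{..<k}. \<beta> j *\<^sub>R (eps j, a j)) = (\<Sum>i<k. \<beta> i * eps i, \<Sum>i<k. \<beta> i * a i)"
      by (simp add: prod_eq_iff fst_sum snd_sum)
    ultimately show "achievable_DP M SX X Y Z G (\<Sum>i<k. \<beta> i * eps i) (\<Sum>i<k. \<beta> i * a i)"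
      unfolding C_def by simp
  next
    fix q assume "q \<in> convex hull {(eps i, a i) | i. i < k}"
    with hull_minimal[where S=convex, OF sub cvx] have "q \<in> C" by blast
    then show "achievable_DP M SX X Y Z G (fst q) (snd q)" unfolding C_def by simp
  qed
qed

end
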